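(* Let $p,q$ be coprime integers with $p$ odd, $q$ even and $0<q<p$. Then the crossing number of the semi-even expansion of $p/q$ is less than or equal to the crossing number of the even expansion of $p/q$.
   Context: For a continued fraction $[a_1,\ldots,a_n]=a_1+\cfrac{1}{a_2+\cfrac{1}{\cdots+\cfrac{1}{a_n}}}$ with integer entries, its crossing number is $\sum_{i=1}^n|a_i|$. Both expansions are produced by the following procedure, which depends on a rule specifying at which steps $k$ the entry is required to be even. Start with $x_1=p/q$ and $\varepsilon_1=+1$. At step $k$, write $x_k=P_k/Q_k>0$ in lowest terms and divide with positive remainder: $P_k=cQ_k+r$ with integers $c$ and $0\le r<Q_k$. If step $k$ is required to be even and $c$ is odd, set $c_k=c+1$ and $r_k=r-Q_k$; otherwise set $c_k=c$ and $r_k=r$. Put $a_k=\varepsilon_k c_k$. If $r_k=0$, stop and output $[a_1,\ldots,a_k]$; otherwise set $x_{k+1}=Q_k/|r_k|$ and $\varepsilon_{k+1}=\varepsilon_k\cdot\mathrm{sign}(r_k)$ and continue. (One has $\varepsilon_k x_k=a_k+1/(\varepsilon_{k+1}x_{k+1})$, so the output is a continued fraction equal to $p/q$, and the procedure terminates.) The even expansion of $p/q$ is the output when every step $k$ is required to be even (all entries are then even). The semi-even expansion of $p/q$ is the output when exactly the steps with even index $k$ are required to be even (entries in odd positions are obtained by ordinary division with nonnegative remainder). For example, for $13/8$ the even expansion is $[2,-2,-2,2]$ (crossing number $8$) and the semi-even expansion is $[1,2,-2,-2]$ (crossing number $7$). *)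

theory Defs
  imports Main
begin

text \<open>Arguments: the rule req (req k means
step k is required to be even), the current numerator P and denominator Q of
x_k (reduced to lowest terms at the start of the step), the sign eps_k and the
step index k. The result is None if the procedure does not terminate.\<close>

partial_function (option) cf_proc ::
  "(nat \<Rightarrow> bool) \<Rightarrow> int \<Rightarrow> int \<Rightarrow> int \<Rightarrow> nat \<Rightarrow> int list option" where
  "cf_proc req P Q e k =
    (let g = gcd P Q; P' = P div g; Q' = Q div g;
         c = P' div Q'; r = P' mod Q';
         ck = (if req k \<and> odd c then c + 1 else c);
         rk = (if req k \<and> odd c then r - Q' else r);
         a = e * ck
     in if rk = 0 then Some [a]
        else Option.bind (cf_proc req Q' \<bar>rk\<bar> (e * sgn rk) (Suc k)) (\<lambda>l. Some (a # l)))"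

definition even_expansion :: "int \<Rightarrow> int \<Rightarrow> int list option" where
  "even_expansion p q = cf_proc (\<lambda>k. True) p q 1 1"

definition semi_even_expansion :: "int \<Rightarrow> int \<Rightarrow> int list option" where
  "semi_even_expansion p q = cf_proc (\<lambda>k. even k) p q 1 1"

definition crossing_number :: "int list \<Rightarrow> int" where
  "crossing_number as = sum_list (map abs as)"

end

theory Submission
  imports Defs
begin


function H :: "bool \<Rightarrow> bool \<Rightarrow> int \<Rightarrow> int \<Rightarrow> int" where
  "H alt b P Q = (if Q \<le> 0 \<or> P mod Q = 0 then P div Q
     else if b \<and> odd (P div Q) then P div Q + 1 + H alt (alt \<noteq> b) Q (Q - P mod Q)
     else P div Q + H alt (alt \<noteq> b) Q (P mod Q))"
  by pat_completeness auto
termination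
  apply (relation "measure (\<lambda>(alt, b, P, Q). nat Q)")
   apply simp
  apply (auto simp: not_le)
  by (smt (verit) pos_mod_sign)

declare H.simps [simp del]

lemma divmod_eq:
  fixes m f Q :: int
  assumes "0 \<le> f" "f < Q"
  shows "(m*Q+f) div Q = m" "(m*Q+f) mod Q = f"
  using assms by (simp_all add: div_pos_pos_trivial mod_pos_pos_trivial)

lemma Hm:
  fixes Q f m :: int
  assumes "0 < f" "f < Q"
  shows "H alt b (m*Q+f) Q = (if b \<and> odd m then m + 1 + H alt (alt \<noteq> b) Q (Q - f)
            else m + H alt (alt \<noteq> b) Q f)"
  using assms by (subst H.simps) (simp add: divmod_eq)

lemma H0:
  fixes Q m :: int
  assumes "0 < Q"
  shows "H alt b (m*Q) Q = m"
  using assms by (subst H.simps) simp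

abbreviation "EE \<equiv> H False True"
abbreviation "TT \<equiv> H True False"
abbreviation "SS \<equiv> H True True"

definition Good :: "int \<Rightarrow> bool" where
  "Good Q \<longleftrightarrow> (\<forall>P.
    (odd P \<and> even Q \<and> 0 < Q \<longrightarrow> TT P Q \<le> EE P Q) \<and>
    (even P \<and> odd Q \<and> 0 < Q \<longrightarrow> SS P Q \<le> EE P Q) \<and>
    (even P \<and> odd Q \<and> 0 < Q \<and> Q < P \<longrightarrow> SS P Q \<le> 1 + EE P (P - Q)) \<and>
    (odd P \<and> even Q \<and> 0 < Q \<and> Q < P \<longrightarrow> TT P Q + 1 \<le> EE (2*P - Q) (P - Q)) \<and>
    (odd P \<and> even Q \<and> 0 < Q \<and> Q < P \<longrightarrow> TT P Q \<le> 1 + EE (P + Q) Q))"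


lemma iter:
  fixes n :: nat
  shows "\<And>P Q. 0 < Q \<Longrightarrow> P div Q = int n + 1 \<Longrightarrow> 0 < P mod Q \<Longrightarrow>
     EE P (P - Q) = 2 * int n + EE (Q + P mod Q) (P mod Q)"
proof (induction n)
  case 0
  have "P = Q * (P div Q) + P mod Q" by simp
  then have "P = Q + P mod Q" using 0 by simp
  then have a: "P - Q = P mod Q" and b: "Q + P mod Q = P" by linarith+
  show ?case unfolding a b by simp
next
  case (Suc n)
  define f where "f = P mod Q"
  have "P = Q * (P div Q) + f" unfolding f_def by simp
  then have P: "P = (int n + 2) * Q + f" using Suc.prems by (simp add: algebra_simps)
  have f: "0 < f" "f < Q" using Suc.prems f_def by auto
  have "Q < P - Q" using P f Suc.prems(1)
    by (simp add: algebra_simps) (smt (verit) mult_nonneg_nonneg of_nat_0_le_iff)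
  then have "EE P (P - Q) = 1 + 1 + EE (P - Q) (P - Q - Q)"
    using Hm[where f=Q and Q="P - Q" and m=1 and alt=False and b=True] Suc.prems(1) by simp
  also have "EE (P - Q) (P - Q - Q) = 2 * int n + EE (Q + (P - Q) mod Q) ((P - Q) mod Q)"
  proof (rule Suc.IH)
    show "0 < Q" by fact
    have "P - Q = (int n + 1) * Q + f" using P by (simp add: algebra_simps)
    then show "(P - Q) div Q = int n + 1" "0 < (P - Q) mod Q"
      using divmod_eq[of f Q "int n + 1"] f by auto
  qed
  also have "(P - Q) mod Q = f"
    by (simp add: f_def)
  finally show ?case unfolding f_def by simp
qed


lemma iter0:
  fixes n :: nat and Q :: int
  assumes "0 < Q"
  shows "EE ((int n + 2) * Q) ((int n + 2) * Q - Q) = 2 * int n + 2"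
proof (induction n)
  case 0
  have "EE (2 * Q) Q = 2" using H0[where Q=Q and m=2] assms by simp
  then show ?case by (simp add: algebra_simps)
next
  case (Suc n)
  have eq1: "(int (Suc n) + 2) * Q = 1 * ((int n + 2) * Q) + Q" by (simp add: algebra_simps)
  have eq2: "(int (Suc n) + 2) * Q - Q = (int n + 2) * Q" by (simp add: algebra_simps)
  have "(int n + 2) * Q = int n * Q + 2 * Q" by (simp add: algebra_simps)
  moreover have "0 \<le> int n * Q" using assms by simp
  ultimately have lt: "Q < (int n + 2) * Q" using assms by linarith
  have "EE ((int (Suc n) + 2) * Q) ((int (Suc n) + 2) * Q - Q)
      = 1 + 1 + EE ((int n + 2) * Q) ((int n + 2) * Q - Q)"
    unfolding eq2 apply (subst eq1)
    using Hm[where f=Q and Q="(int n + 2) * Q" and m=1 and alt=False and b=True] assms lt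
    by simp
  then show ?case using Suc.IH by simp
qed

lemma GoodD:
  assumes "Good Q"
  shows "odd P \<Longrightarrow> even Q \<Longrightarrow> 0 < Q \<Longrightarrow> TT P Q \<le> EE P Q"
    and "even P \<Longrightarrow> odd Q \<Longrightarrow> 0 < Q \<Longrightarrow> SS P Q \<le> EE P Q"
    and "even P \<Longrightarrow> odd Q \<Longrightarrow> 0 < Q \<Longrightarrow> Q < P \<Longrightarrow> SS P Q \<le> 1 + EE P (P - Q)"
    and "odd P \<Longrightarrow> even Q \<Longrightarrow> 0 < Q \<Longrightarrow> Q < P \<Longrightarrow> TT P Q + 1 \<le> EE (2*P - Q) (P - Q)"
    and "odd P \<Longrightarrow> even Q \<Longrightarrow> 0 < Q \<Longrightarrow> Q < P \<Longrightarrow> TT P Q \<le> 1 + EE (P + Q) Q"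
  using assms unfolding Good_def by blast+

lemma decomp:
  fixes P Q :: int
  assumes "0 < Q"
  obtains m f where "P = m * Q + f" "0 \<le> f" "f < Q" "m = P div Q" "f = P mod Q"
  using assms by (metis div_mult_mod_eq pos_mod_bound pos_mod_sign)

lemma partM1:
  assumes IH: "\<And>Q'. 0 < Q' \<Longrightarrow> Q' < Q \<Longrightarrow> Good Q'"
    and a: "odd P" "even Q" "0 < Q"
  shows "TT P Q \<le> EE P Q"
proof -
  obtain m f where P: "P = m * Q + f" "0 \<le> f" "f < Q" using decomp[OF a(3)] by metis
  have of: "odd f" using P(1) a by auto
  then have f0: "0 < f" using P(2) by (cases "f = 0") auto
  have G: "Good f" using IH f0 P(3) by auto
  have T: "TT P Q = m + SS Q f" using Hm[where f=f and Q=Q and m=m and alt=True and b=False] P f0 by simp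
  have E: "EE P Q = (if odd m then m + 1 + EE Q (Q - f) else m + EE Q f)"
    using Hm[where f=f and Q=Q and m=m and alt=False and b=True] P f0 by simp
  show ?thesis
  proof (cases "odd m")
    case True
    then show ?thesis using T E GoodD(3)[OF G, of Q] a of f0 P by simp
  next
    case False
    then show ?thesis using T E GoodD(2)[OF G, of Q] a of f0 P by simp
  qed
qed

lemma partM2:
  assumes IH: "\<And>Q'. 0 < Q' \<Longrightarrow> Q' < Q \<Longrightarrow> Good Q'"
    and a: "even P" "odd Q" "0 < Q"
  shows "SS P Q \<le> EE P Q"
proof -
  obtain m f where P: "P = m * Q + f" "0 \<le> f" "f < Q" using decomp[OF a(3)] by metis
  show ?thesis
  proof (cases "f = 0")
    case True
    then show ?thesis using H0[of Q True True m] H0[of Q False True m] a P by simp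
  next
    case False
    then have f0: "0 < f" using P by simp
    have S: "SS P Q = (if odd m then m + 1 + TT Q (Q - f) else m + TT Q f)"
      using Hm[where f=f and Q=Q and m=m and alt=True and b=True] P f0 by simp
    have E: "EE P Q = (if odd m then m + 1 + EE Q (Q - f) else m + EE Q f)"
      using Hm[where f=f and Q=Q and m=m and alt=False and b=True] P f0 by simp
    show ?thesis
    proof (cases "odd m")
      case True
      then have "odd f" using P(1) a by auto
      moreover have "Good (Q - f)" using IH f0 P(3) by auto
      ultimately show ?thesis using S E GoodD(1)[of "Q - f" Q] a True f0 P by simp
    next
      case False
      then have "even f" using P(1) a by auto
      moreover have "Good f" using IH f0 P(3) by auto
      ultimately show ?thesis using S E GoodD(1)[of f Q] a False f0 P by simp
    qed
  qed
qed

lemma partD: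
  assumes IH: "\<And>Q'. 0 < Q' \<Longrightarrow> Q' < Q \<Longrightarrow> Good Q'"
    and a: "odd P" "even Q" "0 < Q"
  shows "TT P Q \<le> 1 + EE (P + Q) Q"
proof -
  obtain m f where P: "P = m * Q + f" "0 \<le> f" "f < Q" using decomp[OF a(3)] by metis
  have of: "odd f" using P(1) a by auto
  then have f0: "0 < f" using P(2) by (cases "f = 0") auto
  have G: "Good f" using IH f0 P(3) by auto
  have T: "TT P Q = m + SS Q f" using Hm[where f=f and Q=Q and m=m and alt=True and b=False] P f0 by simp
  have PQ: "P + Q = (m + 1) * Q + f" using P by (simp add: algebra_simps)
  have E: "EE (P + Q) Q = (if odd (m + 1) then m + 2 + EE Q (Q - f) else m + 1 + EE Q f)"
    unfolding PQ using Hm[where f=f and Q=Q and m="m+1" and alt=False and b=True] P f0 by simp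
  show ?thesis
  proof (cases "odd m")
    case False
    then show ?thesis using T E GoodD(3)[OF G, of Q] a of f0 P by simp
  next
    case True
    then show ?thesis using T E GoodD(2)[OF G, of Q] a of f0 P by simp
  qed
qed

lemma partC:
  assumes IH: "\<And>Q'. 0 < Q' \<Longrightarrow> Q' < Q \<Longrightarrow> Good Q'"
    and a: "odd P" "even Q" "0 < Q" "Q < P"
  shows "TT P Q + 1 \<le> EE (2*P - Q) (P - Q)"
proof -
  obtain m f where P: "P = m * Q + f" "0 \<le> f" "f < Q" using decomp[OF a(3)] by metis
  have of: "odd f" using P(1) a by auto
  then have f0: "0 < f" using P(2) by (cases "f = 0") auto
  have G: "Good f" using IH f0 P(3) by auto
  have T: "TT P Q = m + SS Q f" using Hm[where f=f and Q=Q and m=m and alt=True and b=False] P f0 by simp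
  have m1: "1 \<le> m"
  proof (rule ccontr)
    assume "\<not> 1 \<le> m" then have "m \<le> 0" by simp
    then have "m * Q \<le> 0" using a(3) by (simp add: mult_nonpos_nonneg)
    then show False using P a by simp
  qed
  show ?thesis
  proof (cases "m = 1")
    case False
    then have m2: "2 \<le> m" using m1 by simp
    have "2 * Q \<le> m * Q" using m2 a(3) by simp
    then have lt: "Q < P - Q" using P f0 by linarith
    have eq1: "2 * P - Q = 2 * (P - Q) + Q" by simp
    have E1: "EE (2*P - Q) (P - Q) = 2 + EE (P - Q) Q"
      unfolding eq1 using Hm[where f=Q and Q="P - Q" and m=2 and alt=False and b=True] lt a by simp
    have eq2: "P - Q = (m - 1) * Q + f" using P by (simp add: algebra_simps)
    have E2: "EE (P - Q) Q = (if odd (m - 1) then m + EE Q (Q - f) else m - 1 + EE Q f)"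
      unfolding eq2 using Hm[where f=f and Q=Q and m="m - 1" and alt=False and b=True] P f0 by simp
    show ?thesis
    proof (cases "odd m")
      case True
      then show ?thesis using T E1 E2 GoodD(2)[OF G, of Q] a of f0 P by simp
    next
      case False
      then show ?thesis using T E1 E2 GoodD(3)[OF G, of Q] a of f0 P by simp
    qed
  next
    case True
    then have PQ: "P = Q + f" using P by simp
    have eq1: "2 * P - Q = Q + 2 * f" "P - Q = f" using PQ by simp_all
    obtain j g where Q: "Q = j * f + g" "0 \<le> g" "g < f" using decomp[OF f0] by metis
    have eq2: "Q + 2 * f = (j + 2) * f + g" using Q by (simp add: algebra_simps)
    show ?thesis
    proof (cases "g = 0")
      case True
      have "SS Q f = j" using H0[of f True True j] Q True f0 by simp
      moreover have "EE (Q + 2 * f) f = j + 2" unfolding eq2 using H0[of f False True "j+2"] True f0 by simp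
      ultimately show ?thesis unfolding eq1 using T \<open>m = 1\<close> by simp
    next
      case False
      then have g0: "0 < g" using Q by simp
      have S: "SS Q f = (if odd j then j + 1 + TT f (f - g) else j + TT f g)"
        using Hm[where f=g and Q=f and m=j and alt=True and b=True] Q g0 by simp
      have E: "EE (Q + 2 * f) f = (if odd (j + 2) then j + 2 + 1 + EE f (f - g) else j + 2 + EE f g)"
        unfolding eq2 using Hm[where f=g and Q=f and m="j+2" and alt=False and b=True] Q g0 by simp
      show ?thesis
      proof (cases "odd j")
        case True
        then have "odd g" using Q(1) a of by auto
        then have ev: "even (f - g)" using of by simp
        have "Good (f - g)" using IH g0 Q(3) P(3) by auto
        then have X: "TT f (f - g) \<le> EE f (f - g)" using GoodD(1)[of "f - g" f] of ev g0 Q(3) by simp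
        have T1: "TT P Q = 1 + (j + 1 + TT f (f - g))" using T S True \<open>m = 1\<close> by simp
        have E1: "EE (2 * P - Q) (P - Q) = j + 2 + 1 + EE f (f - g)" unfolding eq1 using E True by simp
        show ?thesis using X T1 E1 by linarith
      next
        case False
        then have ev: "even g" using Q(1) a of by auto
        have "Good g" using IH g0 Q(3) P(3) by auto
        then have X: "TT f g \<le> EE f g" using GoodD(1)[of g f] of ev g0 by simp
        have T1: "TT P Q = 1 + (j + TT f g)" using T S False \<open>m = 1\<close> by simp
        have E1: "EE (2 * P - Q) (P - Q) = j + 2 + EE f g" unfolding eq1 using E False by simp
        show ?thesis using X T1 E1 by linarith
      qed
    qed
  qed
qed

lemma partA:
  assumes IH: "\<And>Q'. 0 < Q' \<Longrightarrow> Q' < Q \<Longrightarrow> Good Q'"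
    and a: "even P" "odd Q" "0 < Q" "Q < P"
  shows "SS P Q \<le> 1 + EE P (P - Q)"
proof -
  obtain m f where P: "P = m * Q + f" "0 \<le> f" "f < Q" "m = P div Q" "f = P mod Q"
    using decomp[OF a(3)] by metis
  have m1: "1 \<le> m"
  proof (rule ccontr)
    assume "\<not> 1 \<le> m" then have "m \<le> 0" by simp
    then have "m * Q \<le> 0" using a(3) by (simp add: mult_nonpos_nonneg)
    then show False using P(1-3) a by simp
  qed
  show ?thesis
  proof (cases "f = 0")
    case True
    then have "Q < m * Q" using P(1) a by simp
    note lt = this
    have m2: "2 \<le> m"
    proof (rule ccontr)
      assume "\<not> 2 \<le> m" then have "m \<le> 1" by simp
      then have "m * Q \<le> 1 * Q" using a(3) by (intro mult_right_mono) auto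
      then show False using lt by simp
    qed
    have S: "SS P Q = m" using H0[of Q True True m] P(1) True a by simp
    have "EE ((int (nat (m - 2)) + 2) * Q) ((int (nat (m - 2)) + 2) * Q - Q) = 2 * int (nat (m - 2)) + 2"
      by (rule iter0[OF a(3)])
    then have "EE P (P - Q) = 2 * (m - 2) + 2" using m2 P(1) True by simp
    then show ?thesis using S m2 by simp
  next
    case False
    then have f0: "0 < f" using P(2) by simp
    have "EE P (P - Q) = 2 * int (nat (m - 1)) + EE (Q + P mod Q) (P mod Q)"
      by (rule iter) (use a m1 P(4,5) f0 in auto)
    then have E: "EE P (P - Q) = 2 * (m - 1) + EE (Q + f) f" using m1 P(4,5) by simp
    have S: "SS P Q = (if odd m then m + 1 + TT Q (Q - f) else m + TT Q f)"
      using Hm[where f=f and Q=Q and m=m and alt=True and b=True] P(1-3) f0 by simp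
    show ?thesis
    proof (cases "odd m")
      case True
      then have "odd f" using P(1) a by auto
      moreover have "Good (Q - f)" using IH f0 P(3) by auto
      moreover have "2 * Q - (Q - f) = Q + f" "Q - (Q - f) = f" by simp_all
      ultimately show ?thesis using S E GoodD(4)[of "Q - f" Q] a True f0 P(1-3) m1 by simp
    next
      case False
      then have "even f" using P(1) a by auto
      moreover have "Good f" using IH f0 P(3) by auto
      ultimately have X: "TT Q f \<le> 1 + EE (Q + f) f" using GoodD(5)[of f Q] a f0 P(3) by simp
      have "2 \<le> m" using False m1 by presburger
      then show ?thesis using S E X False by simp
    qed
  qed
qed

lemma good_all:
  fixes n :: nat
  shows "Good (int n)"
proof (induction n rule: less_induct)
  case (less n)
  have IH: "\<And>Q'. 0 < Q' \<Longrightarrow> Q' < int n \<Longrightarrow> Good Q'"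
  proof -
    fix Q' :: int assume "0 < Q'" "Q' < int n"
    then have "nat Q' < n" "int (nat Q') = Q'" by auto
    then show "Good Q'" using less by metis
  qed
  show ?case unfolding Good_def
    apply (intro allI conjI impI)
        apply (elim conjE, rule partM1[OF IH], assumption+)
       apply (elim conjE, rule partM2[OF IH], assumption+)
      apply (elim conjE, rule partA[OF IH], assumption+)
     apply (elim conjE, rule partC[OF IH], assumption+)
    apply (elim conjE, rule partD[OF IH], assumption+)
    done
qed

lemma good: "0 < Q \<Longrightarrow> Good Q"
  using good_all[of "nat Q"] by simp


lemma cop_sub: "coprime (Q::int) r \<Longrightarrow> coprime Q (Q - r)"
  by (metis coprime_iff_gcd_eq_1 gcd_diff2 gcd.commute)

lemma cop_mod: "coprime (P::int) Q \<Longrightarrow> coprime Q (P mod Q)"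
  by (metis coprime_commute coprime_mod_left_iff mod_by_0)

lemma link:
  fixes n :: nat
  assumes reqS: "\<forall>j. req (Suc j) = (alt \<noteq> req j)"
  shows "\<And>P Q e k. Q = int n \<Longrightarrow> 0 < P \<Longrightarrow> 0 < Q \<Longrightarrow> coprime P Q \<Longrightarrow> odd (P + Q) \<Longrightarrow>
    (alt \<longrightarrow> (req k \<longleftrightarrow> even P)) \<Longrightarrow> (\<not> alt \<longrightarrow> req k) \<Longrightarrow> \<bar>e\<bar> = 1 \<Longrightarrow>
    \<exists>l. cf_proc req P Q e k = Some l \<and> crossing_number l = H alt (req k) P Q"
proof (induction n rule: less_induct)
  case (less n)
  note Qn = less.prems(1)
  note pos = less.prems(2,3)
  note cop = less.prems(4)
  note par = less.prems(5)
  note inv = less.prems(6,7)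
  note ee = less.prems(8)
  have g1: "gcd P Q = 1" using cop by simp
  obtain c r where P: "P = c * Q + r" "0 \<le> r" "r < Q" "c = P div Q" "r = P mod Q"
    using decomp[OF pos(2)] by metis
  have c0: "0 \<le> c" using pos by (simp add: P(4) pos_imp_zdiv_nonneg_iff)
  have unf: "cf_proc req P Q e k =
     (let ck = if req k \<and> odd c then c + 1 else c;
          rk = if req k \<and> odd c then r - Q else r; a = e * ck
      in if rk = 0 then Some [a]
         else Option.bind (cf_proc req Q \<bar>rk\<bar> (e * sgn rk) (Suc k)) (\<lambda>l. Some (a # l)))"
    by (subst cf_proc.simps) (simp add: g1 P(4,5) Let_def)
  show ?case
  proof (cases "r = 0")
    case True
    then have "Q dvd P" using P(5) by auto
    then have "is_unit Q" using cop
      by (metis coprime_common_divisor dvd_refl)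
    then have Q1: "Q = 1" using pos by simp
    then have "even P" using par by simp
    then have "even c" using P(4) Q1 by simp
    then have "cf_proc req P Q e k = Some [e * c]" using unf True by simp
    moreover have "H alt (req k) P Q = c" using H0[of Q alt "req k" c] P(1) True pos by simp
    moreover have "\<bar>e * c\<bar> = c" using ee c0 by (simp add: abs_mult)
    ultimately show ?thesis by (simp add: crossing_number_def)
  next
    case False
    then have r0: "0 < r" using P(2) by simp
    have Hst: "H alt (req k) P Q = (if req k \<and> odd c then c + 1 + H alt (req (Suc k)) Q (Q - r)
            else c + H alt (req (Suc k)) Q r)"
      using Hm[where f=r and Q=Q and m=c and alt=alt and b="req k"] P(1) r0 P(3) reqS by simp
    show ?thesis
    proof (cases "req k \<and> odd c")
      case True
      have rk: "r - Q \<noteq> 0" "\<bar>r - Q\<bar> = Q - r" "sgn (r - Q) = -1" using P(3) by auto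
      have "\<exists>l. cf_proc req Q (Q - r) (e * -1) (Suc k) = Some l \<and>
               crossing_number l = H alt (req (Suc k)) Q (Q - r)"
      proof (rule less.IH[of "nat (Q - r)"])
        show "nat (Q - r) < n" using Qn r0 P(3) by simp
        show "Q - r = int (nat (Q - r))" "0 < Q" "0 < Q - r" using pos P(3) by auto
        show "coprime Q (Q - r)" using cop_sub cop_mod[OF cop] P(5) by simp
        have "odd r" using P(1) True par by auto
        then show "odd (Q + (Q - r))" by simp
        show "alt \<longrightarrow> req (Suc k) = even Q" using reqS True par inv by auto
        show "\<not> alt \<longrightarrow> req (Suc k)" using reqS True by simp
        show "\<bar>e * -1\<bar> = 1" using ee by simp
      qed
      then obtain l where l: "cf_proc req Q (Q - r) (e * -1) (Suc k) = Some l"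
        "crossing_number l = H alt (req (Suc k)) Q (Q - r)" by blast
      have "cf_proc req P Q e k = Some (e * (c + 1) # l)" using unf True rk l(1) by simp
      moreover have "\<bar>e * (c + 1)\<bar> = c + 1" using ee c0 by (simp add: abs_mult)
      ultimately show ?thesis using Hst True l(2) by (simp add: crossing_number_def)
    next
      case nt: False
      have rk: "\<bar>r\<bar> = r" "sgn r = 1" using r0 by auto
      have "\<exists>l. cf_proc req Q r (e * 1) (Suc k) = Some l \<and>
               crossing_number l = H alt (req (Suc k)) Q r"
      proof (rule less.IH[of "nat r"])
        show "nat r < n" using Qn r0 P(3) by simp
        show "r = int (nat r)" "0 < Q" "0 < r" using pos r0 by auto
        show "coprime Q r" using cop_mod[OF cop] P(5) by simp
        show "odd (Q + r)"
        proof (cases "req k")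
          case True
          then have "even c" using nt by simp
          then show ?thesis using P(1) par by auto
        next
          case False
          then have "alt" "odd P" using inv by auto
          then show ?thesis using P(1) par by auto
        qed
        show "alt \<longrightarrow> req (Suc k) = even Q"
        proof
          assume alt
          show "req (Suc k) = even Q"
          proof (cases "req k")
            case True then show ?thesis using reqS inv \<open>alt\<close> par by auto
          next
            case False then show ?thesis using reqS inv \<open>alt\<close> par by auto
          qed
        qed
        show "\<not> alt \<longrightarrow> req (Suc k)" using reqS inv by simp
        show "\<bar>e * 1\<bar> = 1" using ee by simp
      qed
      then obtain l where l: "cf_proc req Q r (e * 1) (Suc k) = Some l"
        "crossing_number l = H alt (req (Suc k)) Q r" by blast
      have "cf_proc req P Q e k = Some (e * c # l)" using unf nt rk l(1) False by simp
      moreover have "\<bar>e * c\<bar> = c" using ee c0 by (simp add: abs_mult)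
      ultimately show ?thesis using Hst nt l(2) by (simp add: crossing_number_def)
    qed
  qed
qed

theorem proposition5:
  fixes p q :: int
  assumes "coprime p q" and "odd p" and "even q" and "0 < q" and "q < p"
  shows "\<exists>e s. even_expansion p q = Some e \<and> semi_even_expansion p q = Some s \<and>
           crossing_number s \<le> crossing_number e"
proof -
  have "\<exists>l. cf_proc (\<lambda>k. True) p q 1 1 = Some l \<and> crossing_number l = H False True p q"
    by (rule link[where req="\<lambda>k. True" and alt=False and n="nat q" and P=p and Q=q and e=1 and k=1]) (use assms in auto)
  then obtain e where e: "even_expansion p q = Some e" "crossing_number e = EE p q"
    unfolding even_expansion_def by blast
  have "\<exists>l. cf_proc (\<lambda>k. even k) p q 1 1 = Some l \<and> crossing_number l = H True False p q"
    using link[where req="\<lambda>k. even k" and alt=True and n="nat q" and P=p and Q=q and e=1 and k=1] assms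
    by simp
  then obtain s where s: "semi_even_expansion p q = Some s" "crossing_number s = TT p q"
    unfolding semi_even_expansion_def by auto
  have "TT p q \<le> EE p q" using GoodD(1)[OF good[OF assms(4)]] assms by simp
  then show ?thesis using e s by auto
qed

end
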